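(* Let $c, r$ be positive integers. Call a set of squares of an $m \times n$ grid a valid $(c,r)$-tree configuration if every column contains exactly $c$ of the chosen squares (trees), every row contains exactly $r$ trees, and no two trees are in squares adjacent horizontally, vertically, or diagonally. Then: (i) if a valid $(c,r)$-tree configuration exists on an $m \times n$ grid with $(m,n) \neq (1,1)$, then $m \ge 4c$ and $n \ge 4r$ (the $1 \times 1$ grid admits one only when $c=r=1$); (ii) the $4c \times 4r$ grid admits exactly two valid $(c,r)$-tree configurations. Index rows $1,\dots,4c$ from top and columns $1,\dots,4r$ from left. These configurations are the following. The first has trees at $(2i-1,2j)$ for $1\le i\le c,\ 1\le j\le r$; at $(2i,2j)$ for $1\le i\le c,\ r<j\le 2r$; at $(2i-1,2j-1)$ for $c<i\le 2c,\ 1\le j\le r$; and at $(2i,2j-1)$ for $c<i\le 2c,\ r<j\le 2r$. The second is the image of the first under the row reflection $(k,\ell)\mapsto(4c+1-k,\ell)$.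
   Context: A valid configuration of trees for a $(c,r)$-tree Parks puzzle on an $m\times n$ grid is a set of squares satisfying the column, row and non-adjacency conditions stated in the claim. The paper calls the two configurations on the $4c\times 4r$ grid "Shuriken arrangements". Equivalently: divide the $4c\times 4r$ grid into $2\times 2$ boxes and into four quadrants of size $2c \times 2r$. Within each quadrant every box has its tree in the same position. In the first arrangement this position is the top-right cell of the box in the upper-left quadrant, the bottom-right cell in the upper-right quadrant, the top-left cell in the lower-left quadrant, and the bottom-left cell in the lower-right quadrant. *)

theory Defs
  imports Main
begin

text \<open>Squares of an m x n grid are pairs (k, l) with row index k in {1..m}
  (counted from the top) and column index l in {1..n} (counted from the left).\<close>

definition adjacent :: "nat \<times> nat \<Rightarrow> nat \<times> nat \<Rightarrow> bool" where
  "adjacent p q \<longleftrightarrow> p \<noteq> q \<and>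
     fst p \<le> fst q + 1 \<and> fst q \<le> fst p + 1 \<and>
     snd p \<le> snd q + 1 \<and> snd q \<le> snd p + 1"

definition valid_config :: "nat \<Rightarrow> nat \<Rightarrow> nat \<Rightarrow> nat \<Rightarrow> (nat \<times> nat) set \<Rightarrow> bool" where
  "valid_config m n c r S \<longleftrightarrow>
     S \<subseteq> {1..m} \<times> {1..n} \<and>
     (\<forall>l\<in>{1..n}. card {k. (k, l) \<in> S} = c) \<and>
     (\<forall>k\<in>{1..m}. card {l. (k, l) \<in> S} = r) \<and>
     (\<forall>p\<in>S. \<forall>q\<in>S. \<not> adjacent p q)"

definition shuriken1 :: "nat \<Rightarrow> nat \<Rightarrow> (nat \<times> nat) set" where
  "shuriken1 c r =
     {(2*i - 1, 2*j) | i j. 1 \<le> i \<and> i \<le> c \<and> 1 \<le> j \<and> j \<le> r} \<union>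
     {(2*i, 2*j) | i j. 1 \<le> i \<and> i \<le> c \<and> r < j \<and> j \<le> 2*r} \<union>
     {(2*i - 1, 2*j - 1) | i j. c < i \<and> i \<le> 2*c \<and> 1 \<le> j \<and> j \<le> r} \<union>
     {(2*i, 2*j - 1) | i j. c < i \<and> i \<le> 2*c \<and> r < j \<and> j \<le> 2*r}"

definition shuriken2 :: "nat \<Rightarrow> nat \<Rightarrow> (nat \<times> nat) set" where
  "shuriken2 c r = (\<lambda>(k, l). (4*c + 1 - k, l)) ` shuriken1 c r"

end

theory Submission
  imports Defs
begin


lemma same_box: "(x+1) div 2 = (y+1) div 2 \<Longrightarrow> (even x \<longleftrightarrow> even (y::nat)) \<Longrightarrow> x = y" by presburger

lemma half_range: "1 \<le> (x::nat) \<Longrightarrow> x \<le> 4*N \<Longrightarrow> 1 \<le> (x+1) div 2 \<and> (x+1) div 2 \<le> 2*N" by presburger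

lemma vc_noadj:
  assumes "valid_config m n c r S" "(k,l) \<in> S" "(k',l') \<in> S" "k \<le> k'+1" "k' \<le> k+1" "l \<le> l'+1" "l' \<le> l+1"
  shows "k = k' \<and> l = l'"
  using assms unfolding valid_config_def adjacent_def by fastforce

lemma vc_sub:
  assumes "valid_config m n c r S" "(k,l) \<in> S"
  shows "1 \<le> k \<and> k \<le> m \<and> 1 \<le> l \<and> l \<le> n"
  using assms unfolding valid_config_def by auto

lemma vc_col:
  assumes "valid_config m n c r S" "1 \<le> l" "l \<le> n"
  shows "card {k. (k,l) \<in> S} = c"
  using assms unfolding valid_config_def by auto

lemma vc_row:
  assumes "valid_config m n c r S" "1 \<le> k" "k \<le> m"
  shows "card {l. (k,l) \<in> S} = r"
  using assms unfolding valid_config_def by auto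

lemma rowpair:
  assumes V: "valid_config m n c r S" and k: "1 \<le> k" "k+1 \<le> m"
  shows "card {l. (k,l)\<in>S \<or> (k+1,l)\<in>S} = 2*r"
    and "{l. (k,l)\<in>S \<or> (k+1,l)\<in>S} \<subseteq> {1..n}"
    and "\<And>l. l \<in> {l. (k,l)\<in>S \<or> (k+1,l)\<in>S} \<Longrightarrow> l+1 \<notin> {l. (k,l)\<in>S \<or> (k+1,l)\<in>S}"
proof -
  have f1: "finite {l. (k,l)\<in>S}"
    by (rule finite_subset[of _ "{1..n}"]) (use vc_sub[OF V] in auto)
  have f2: "finite {l. (k+1,l)\<in>S}"
    by (rule finite_subset[of _ "{1..n}"]) (use vc_sub[OF V] in auto)
  have d: "{l. (k,l)\<in>S} \<inter> {l. (k+1,l)\<in>S} = {}"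
    using vc_noadj[OF V] by fastforce
  have e: "{l. (k,l)\<in>S \<or> (k+1,l)\<in>S} = {l. (k,l)\<in>S} \<union> {l. (k+1,l)\<in>S}" by auto
  show "card {l. (k,l)\<in>S \<or> (k+1,l)\<in>S} = 2*r"
    unfolding e using card_Un_disjoint[OF f1 f2 d] vc_row[OF V] k by simp
  show "{l. (k,l)\<in>S \<or> (k+1,l)\<in>S} \<subseteq> {1..n}" using vc_sub[OF V] by auto
  fix l assume "l \<in> {l. (k,l)\<in>S \<or> (k+1,l)\<in>S}"
  then show "l+1 \<notin> {l. (k,l)\<in>S \<or> (k+1,l)\<in>S}"
    using vc_noadj[OF V, of _ l _ "l+1"] by fastforce
qed

lemma nbound:
  assumes V: "valid_config m n c r S" and m: "2 \<le> m" and c: "0 < c"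
  shows "4*r \<le> n"
proof (rule ccontr)
  assume nl: "\<not> 4*r \<le> n"
  define A where "A = {l. (1,l)\<in>S \<or> (1+1,l)\<in>S}"
  have cA: "card A = 2*r" and sA: "A \<subseteq> {1..n}" and nA: "\<And>l. l\<in>A \<Longrightarrow> l+1 \<notin> A"
    using rowpair[OF V, of 1] m unfolding A_def by auto
  have fA: "finite A" using sA finite_subset by blast
  have "card (A \<union> Suc ` A) = 4*r"
    using card_Un_disjoint[OF fA finite_imageI[OF fA]] nA cA card_image[of Suc A] by force
  moreover have "A \<union> Suc ` A \<subseteq> {1..n+1}" using sA by auto
  ultimately have "4*r \<le> n+1" by (metis card_atLeastAtMost card_mono finite_atLeastAtMost diff_Suc_1 Suc_eq_plus1)
  hence n: "n = 4*r - 1" "r > 0" using nl by auto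
  have "card {k. (k,2) \<in> S} = c" using vc_col[OF V, of 2] n by auto
  then obtain k0 where k0: "(k0,2) \<in> S" using c by (metis (no_types, lifting) card.empty empty_Collect_eq less_irrefl)
  define k1 where "k1 = (if k0 < m then k0 else k0 - 1)"
  have k1: "1 \<le> k1" "k1 + 1 \<le> m" "k0 = k1 \<or> k0 = k1+1" using vc_sub[OF V k0] m unfolding k1_def by auto
  define B where "B = {l. (k1,l)\<in>S \<or> (k1+1,l)\<in>S}"
  have cB: "card B = 2*r" and sB: "B \<subseteq> {1..n}" and nB: "\<And>l. l\<in>B \<Longrightarrow> l+1 \<notin> B"
    using rowpair[OF V k1(1,2)] unfolding B_def by auto
  have fB: "finite B" using sB finite_subset by blast
  have "card (B \<union> Suc ` B) = 4*r"
    using card_Un_disjoint[OF fB finite_imageI[OF fB]] nB cB card_image[of Suc B] by force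
  moreover have "B \<union> Suc ` B \<subseteq> {1..4*r}" proof
    fix x assume "x \<in> B \<union> Suc ` B"
    then obtain y where "y \<in> B" "x = y \<or> x = Suc y" by auto
    then show "x \<in> {1..4*r}" using sB n by force
  qed
  ultimately have "B \<union> Suc ` B = {1..4*r}" by (simp add: card_subset_eq)
  hence "1 \<in> B \<union> Suc ` B" using n by auto
  moreover have "0 \<notin> B" using sB by auto
  ultimately have "1 \<in> B" by auto
  moreover have "2 \<in> B" using k0 k1 unfolding B_def by auto
  ultimately show False using nB[of 1] by (simp add: numeral_2_eq_2)
qed



lemma transpose:
  assumes V: "valid_config m n c r S"
  shows "valid_config n m r c ((\<lambda>(k,l). (l,k)) ` S)"
proof -
  let ?S = "(\<lambda>(k,l). (l,k)) ` S"
  have mem: "\<And>a b. (a,b) \<in> ?S \<longleftrightarrow> (b,a) \<in> S" by force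
  have 1: "?S \<subseteq> {1..n} \<times> {1..m}"
  proof
    fix p assume "p \<in> ?S" then obtain a b where "p = (a,b)" "(b,a) \<in> S" using mem by (cases p) auto
    thus "p \<in> {1..n} \<times> {1..m}" using vc_sub[OF V] by auto
  qed
  have 2: "\<forall>l\<in>{1..m}. card {k. (k, l) \<in> ?S} = r" unfolding mem using vc_row[OF V] by auto
  have 3: "\<forall>k\<in>{1..n}. card {l. (k, l) \<in> ?S} = c" unfolding mem using vc_col[OF V] by auto
  have 4: "\<forall>p\<in>?S. \<forall>q\<in>?S. \<not> adjacent p q"
  proof (intro ballI)
    fix p q assume "p \<in> ?S" "q \<in> ?S"
    then obtain a b a' b' where "p = (a,b)" "q = (a',b')" "(b,a) \<in> S" "(b',a') \<in> S"
      using mem by (cases p, cases q) auto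
    thus "\<not> adjacent p q" using vc_noadj[OF V, of b a b' a'] unfolding adjacent_def by auto
  qed
  show ?thesis unfolding valid_config_def using 1 2 3 4 by blast
qed

lemma m1:
  assumes V: "valid_config 1 n c r S" and c: "0 < c"
  shows "n \<le> 1"
proof (rule ccontr)
  assume "\<not> n \<le> 1"
  hence n: "2 \<le> n" by simp
  have "\<exists>k. (k,l) \<in> S" if "1 \<le> l" "l \<le> n" for l
  proof -
    have "card {k. (k,l) \<in> S} = c" using vc_col[OF V that] .
    thus ?thesis using c by (metis (no_types, lifting) card.empty empty_Collect_eq less_irrefl)
  qed
  then obtain k1 k2 where "(k1,1) \<in> S" "(k2,2) \<in> S" using n by fastforce
  moreover have "k1 = 1" "k2 = 1" using vc_sub[OF V calculation(1)] vc_sub[OF V calculation(2)] by auto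
  ultimately show False using vc_noadj[OF V, of 1 1 1 2] by auto
qed

lemma part1:
  assumes c: "0 < c" and r: "0 < r" and mn: "1 \<le> m" "1 \<le> n" "(m, n) \<noteq> (1, 1)"
    and V: "valid_config m n c r S"
  shows "4*c \<le> m \<and> 4*r \<le> n"
proof -
  have V2: "valid_config n m r c ((\<lambda>(k,l). (l,k)) ` S)" by (rule transpose[OF V])
  have m2: "2 \<le> m"
  proof (rule ccontr)
    assume "\<not> 2 \<le> m" hence "m = 1" using mn by simp
    thus False using m1[of n c r S] V c mn by auto
  qed
  have n2: "2 \<le> n"
  proof (rule ccontr)
    assume "\<not> 2 \<le> n" hence "n = 1" using mn by simp
    thus False using m1[OF _ r, of m] V2 m2 by auto
  qed
  show ?thesis using nbound[OF V m2 c] nbound[OF V2 n2 r] by simp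
qed

lemma part11:
  assumes c: "0 < c" and r: "0 < r"
  shows "(\<exists>S. valid_config 1 1 c r S) \<longleftrightarrow> c = 1 \<and> r = 1"
proof
  assume "\<exists>S. valid_config 1 1 c r S"
  then obtain S where V: "valid_config 1 1 c r S" by blast
  have "{k. (k,1) \<in> S} \<subseteq> {1}"
  proof (rule subsetI)
    fix x assume "x \<in> {k. (k,1)\<in>S}" hence "(x,1)\<in>S" by simp
    from vc_sub[OF V this] show "x \<in> {1}" by simp
  qed
  hence "card {k. (k,1) \<in> S} \<le> 1" by (metis card.empty card.insert card_mono empty_iff finite.intros(1) finite.intros(2) One_nat_def)
  moreover have "{l. (1,l) \<in> S} \<subseteq> {1}"
  proof (rule subsetI)
    fix x assume "x \<in> {l. (1,l)\<in>S}" hence "(1,x)\<in>S" by simp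
    from vc_sub[OF V this] show "x \<in> {1}" by simp
  qed
  hence "card {l. (1,l) \<in> S} \<le> 1" by (metis card.empty card.insert card_mono empty_iff finite.intros(1) finite.intros(2) One_nat_def)
  ultimately show "c = 1 \<and> r = 1" using vc_col[OF V, of 1] vc_row[OF V, of 1] c r by auto
next
  assume "c = 1 \<and> r = 1"
  moreover have "valid_config 1 1 1 1 {(1,1)}"
    unfolding valid_config_def adjacent_def by auto
  ultimately show "\<exists>S. valid_config 1 1 c r S" by blast
qed



lemma upclosed:
  fixes P :: "nat \<Rightarrow> bool"
  assumes up: "\<And>b. 1 \<le> b \<Longrightarrow> b < N \<Longrightarrow> P b \<Longrightarrow> P (b+1)" and cd: "card {b\<in>{1..N}. P b} = k"
    and b: "1 \<le> b" "b \<le> N"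
  shows "P b \<longleftrightarrow> N - k < b"
proof -
  have mono: "P x \<Longrightarrow> x \<le> y \<Longrightarrow> y \<le> N \<Longrightarrow> 1 \<le> x \<Longrightarrow> P y" for x y
  proof (induction y)
    case 0 thus ?case by simp
  next
    case (Suc y) show ?case
    proof (cases "x = Suc y")
      case True thus ?thesis using Suc by simp
    next
      case False hence xy: "x \<le> y" using Suc by simp
      hence "P y" using Suc by simp
      thus ?thesis using up[of y] Suc.prems xy by simp
    qed
  qed
  have "{b\<in>{1..N}. P b} \<subseteq> {1..N}" by auto
  from card_mono[OF finite_atLeastAtMost this] have kN: "k \<le> N" using cd by simp
  show ?thesis
  proof
    assume "P b"
    hence "{b..N} \<subseteq> {x\<in>{1..N}. P x}" using mono[OF \<open>P b\<close>] b by auto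
    hence "card {b..N} \<le> k" using cd card_mono[of "{x\<in>{1..N}. P x}" "{b..N}"] by simp
    thus "N - k < b" using b by simp
  next
    assume nk: "N - k < b"
    show "P b"
    proof (rule ccontr)
      assume "\<not> P b"
      have "{x\<in>{1..N}. P x} \<subseteq> {b+1..N}"
      proof (rule subsetI)
        fix x assume "x \<in> {x\<in>{1..N}. P x}" hence x: "1\<le>x" "x\<le>N" "P x" by auto
        have "\<not> x \<le> b" using mono[OF x(3) _ b(2) x(1)] \<open>\<not> P b\<close> by blast
        thus "x \<in> {b+1..N}" using x by simp
      qed
      hence "k \<le> card {b+1..N}" using cd card_mono[of "{b+1..N}"] by fastforce
      thus False using nk kN b by simp
    qed
  qed
qed

lemma downclosed:
  fixes P :: "nat \<Rightarrow> bool"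
  assumes dn: "\<And>b. 1 \<le> b \<Longrightarrow> b < N \<Longrightarrow> P (b+1) \<Longrightarrow> P b" and cd: "card {b\<in>{1..N}. P b} = k"
    and b: "1 \<le> b" "b \<le> N"
  shows "P b \<longleftrightarrow> b \<le> k"
proof -
  have mono: "P y \<Longrightarrow> x \<le> y \<Longrightarrow> y \<le> N \<Longrightarrow> 1 \<le> x \<Longrightarrow> P x" for x y
  proof (induction y)
    case 0 thus ?case by simp
  next
    case (Suc y) show ?case
    proof (cases "x = Suc y")
      case True thus ?thesis using Suc by simp
    next
      case False hence xy: "x \<le> y" using Suc by simp
      have "P y" using dn[of y] Suc.prems xy by simp
      thus ?thesis using Suc xy by simp
    qed
  qed
  show ?thesis
  proof
    assume "P b"
    hence "{1..b} \<subseteq> {x\<in>{1..N}. P x}" using mono[OF \<open>P b\<close>] b by auto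
    hence "card {1..b} \<le> k" using cd card_mono[of "{x\<in>{1..N}. P x}" "{1..b}"] by simp
    thus "b \<le> k" by simp
  next
    assume nk: "b \<le> k"
    show "P b"
    proof (rule ccontr)
      assume "\<not> P b"
      have "{x\<in>{1..N}. P x} \<subseteq> {1..b-1}"
      proof (rule subsetI)
        fix x assume "x \<in> {x\<in>{1..N}. P x}" hence x: "1\<le>x" "x\<le>N" "P x" by auto
        have "\<not> b \<le> x" using mono[OF x(3) _ x(2) b(1)] \<open>\<not> P b\<close> by blast
        thus "x \<in> {1..b-1}" using x by simp
      qed
      hence "k \<le> card {1..b-1}" using cd card_mono[of "{1..b-1}"] by fastforce
      thus False using nk b by simp
    qed
  qed
qed


lemma mem_S1:
  "(k,l) \<in> shuriken1 c r \<longleftrightarrow> (1 \<le> k \<and> k \<le> 4*c \<and> 1 \<le> l \<and> l \<le> 4*r \<and> (odd k \<longleftrightarrow> l \<le> 2*r) \<and> (even l \<longleftrightarrow> k \<le> 2*c))"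
proof
  assume "(k,l) \<in> shuriken1 c r"
  then consider (a) i j where "k = 2*i-1" "l = 2*j" "1 \<le> i" "i \<le> c" "1 \<le> j" "j \<le> r"
    | (b) i j where "k = 2*i" "l = 2*j" "1 \<le> i" "i \<le> c" "r < j" "j \<le> 2*r"
    | (c) i j where "k = 2*i-1" "l = 2*j-1" "c < i" "i \<le> 2*c" "1 \<le> j" "j \<le> r"
    | (d) i j where "k = 2*i" "l = 2*j-1" "c < i" "i \<le> 2*c" "r < j" "j \<le> 2*r"
    unfolding shuriken1_def by blast
  then show "1 \<le> k \<and> k \<le> 4*c \<and> 1 \<le> l \<and> l \<le> 4*r \<and> (odd k \<longleftrightarrow> l \<le> 2*r) \<and> (even l \<longleftrightarrow> k \<le> 2*c)"
    by cases presburger+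
next
  assume h: "1 \<le> k \<and> k \<le> 4*c \<and> 1 \<le> l \<and> l \<le> 4*r \<and> (odd k \<longleftrightarrow> l \<le> 2*r) \<and> (even l \<longleftrightarrow> k \<le> 2*c)"
  have "(\<exists>i j. k = 2*i-1 \<and> l = 2*j \<and> 1 \<le> i \<and> i \<le> c \<and> 1 \<le> j \<and> j \<le> r)
    \<or> (\<exists>i j. k = 2*i \<and> l = 2*j \<and> 1 \<le> i \<and> i \<le> c \<and> r < j \<and> j \<le> 2*r)
    \<or> (\<exists>i j. k = 2*i-1 \<and> l = 2*j-1 \<and> c < i \<and> i \<le> 2*c \<and> 1 \<le> j \<and> j \<le> r)
    \<or> (\<exists>i j. k = 2*i \<and> l = 2*j-1 \<and> c < i \<and> i \<le> 2*c \<and> r < j \<and> j \<le> 2*r)"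
    using h by presburger
  then show "(k,l) \<in> shuriken1 c r" unfolding shuriken1_def by blast
qed

lemma mem_S2:
  "(k,l) \<in> shuriken2 c r \<longleftrightarrow> (1 \<le> k \<and> k \<le> 4*c \<and> 1 \<le> l \<and> l \<le> 4*r \<and> (even k \<longleftrightarrow> l \<le> 2*r) \<and> (even l \<longleftrightarrow> 2*c < k))"
proof
  assume "(k,l) \<in> shuriken2 c r"
  then obtain k' where k': "(k',l) \<in> shuriken1 c r" "k = 4*c+1-k'" unfolding shuriken2_def by auto
  thus "1 \<le> k \<and> k \<le> 4*c \<and> 1 \<le> l \<and> l \<le> 4*r \<and> (even k \<longleftrightarrow> l \<le> 2*r) \<and> (even l \<longleftrightarrow> 2*c < k)"
    unfolding mem_S1 by presburger
next
  assume h: "1 \<le> k \<and> k \<le> 4*c \<and> 1 \<le> l \<and> l \<le> 4*r \<and> (even k \<longleftrightarrow> l \<le> 2*r) \<and> (even l \<longleftrightarrow> 2*c < k)"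
  have "(4*c+1-k, l) \<in> shuriken1 c r" unfolding mem_S1 using h by presburger
  moreover have "k = 4*c+1-(4*c+1-k)" using h by simp
  ultimately show "(k,l) \<in> shuriken2 c r" unfolding shuriken2_def by (metis (no_types, lifting) case_prod_conv image_eqI)
qed



lemma cardL:
  fixes N :: nat
  shows "card {x\<in>{1..4*N}. (odd x \<longleftrightarrow> P) \<and> (x \<le> 2*N \<longleftrightarrow> Q)} = N"
proof -
  define d where "d = (if Q then 0 else 2*N) + (if P then 0 else 1)"
  define f where "f i = 2*i - 1 + d" for i :: nat
  have inj: "inj_on f {1..N}" unfolding f_def by (rule inj_onI) auto
  have "x \<in> {x\<in>{1..4*N}. (odd x \<longleftrightarrow> P) \<and> (x \<le> 2*N \<longleftrightarrow> Q)} \<longleftrightarrow> x \<in> f ` {1..N}" for x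
  proof -
    have "x \<in> f ` {1..N} \<longleftrightarrow> (\<exists>i. 1 \<le> i \<and> i \<le> N \<and> x = 2*i - 1 + d)" unfolding f_def by auto
    moreover have "x \<in> {x\<in>{1..4*N}. (odd x \<longleftrightarrow> P) \<and> (x \<le> 2*N \<longleftrightarrow> Q)} \<longleftrightarrow> (\<exists>i. 1 \<le> i \<and> i \<le> N \<and> x = 2*i - 1 + d)"
      unfolding d_def by (cases P; cases Q) (simp; presburger)+
    ultimately show ?thesis by blast
  qed
  hence "{x\<in>{1..4*N}. (odd x \<longleftrightarrow> P) \<and> (x \<le> 2*N \<longleftrightarrow> Q)} = f ` {1..N}" by blast
  thus ?thesis using card_image[OF inj] by simp
qed

lemma G_nonadj:
  fixes k l k' l' c r :: nat
  assumes F1: "(odd k \<longleftrightarrow> (l \<le> 2*r \<longleftrightarrow> s)) \<and> (even l \<longleftrightarrow> (k \<le> 2*c \<longleftrightarrow> s))"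
    and F2: "(odd k' \<longleftrightarrow> (l' \<le> 2*r \<longleftrightarrow> s)) \<and> (even l' \<longleftrightarrow> (k' \<le> 2*c \<longleftrightarrow> s))"
    and b: "k \<le> k'+1" "k' \<le> k+1" "l \<le> l'+1" "l' \<le> l+1"
  shows "k = k' \<and> l = l'"
proof -
  have d1: "k' = k \<or> k' = k+1 \<or> k = k'+1" and d2: "l' = l \<or> l' = l+1 \<or> l = l'+1" using b by linarith+
  show ?thesis
    using d1 d2 F1 F2 apply (elim disjE) by (cases s; simp; presburger)+
qed

lemma valid_gen:
  assumes T: "\<And>k l. (k,l)\<in>T \<longleftrightarrow> (1 \<le> k \<and> k \<le> 4*c \<and> 1 \<le> l \<and> l \<le> 4*r \<and> (odd k \<longleftrightarrow> (l \<le> 2*r \<longleftrightarrow> s)) \<and> (even l \<longleftrightarrow> (k \<le> 2*c \<longleftrightarrow> s)))"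
  shows "valid_config (4*c) (4*r) c r T"
  unfolding valid_config_def
proof (intro conjI ballI)
  show "T \<subseteq> {1..4*c} \<times> {1..4*r}"
  proof
    fix p assume "p \<in> T" then obtain k l where "p = (k,l)" "(k,l) \<in> T" by (cases p) auto
    thus "p \<in> {1..4*c} \<times> {1..4*r}" using T[of k l] by simp
  qed
next
  fix l assume l: "l \<in> {1..4*r}"
  have "(k,l)\<in>T \<longleftrightarrow> k \<in> {1..4*c} \<and> ((odd k \<longleftrightarrow> (l \<le> 2*r \<longleftrightarrow> s)) \<and> (k \<le> 2*c \<longleftrightarrow> (even l \<longleftrightarrow> s)))" for k
    using T[of k l] l unfolding atLeastAtMost_iff by argo
  hence "{k. (k,l)\<in>T} = {x\<in>{1..4*c}. (odd x \<longleftrightarrow> (l \<le> 2*r \<longleftrightarrow> s)) \<and> (x \<le> 2*c \<longleftrightarrow> (even l \<longleftrightarrow> s))}"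
    by (intro Collect_cong) 
  thus "card {k. (k,l)\<in>T} = c" using cardL by simp
next
  fix k assume k: "k \<in> {1..4*c}"
  have "(k,l)\<in>T \<longleftrightarrow> l \<in> {1..4*r} \<and> ((odd l \<longleftrightarrow> \<not>(k \<le> 2*c \<longleftrightarrow> s)) \<and> (l \<le> 2*r \<longleftrightarrow> (odd k \<longleftrightarrow> s)))" for l
    using T[of k l] k unfolding atLeastAtMost_iff by argo
  hence "{l. (k,l)\<in>T} = {x\<in>{1..4*r}. (odd x \<longleftrightarrow> \<not>(k \<le> 2*c \<longleftrightarrow> s)) \<and> (x \<le> 2*r \<longleftrightarrow> (odd k \<longleftrightarrow> s))}"
    by (intro Collect_cong)
  thus "card {l. (k,l)\<in>T} = r" using cardL by simp
next
  fix p q assume "p \<in> T" "q \<in> T"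
  then obtain k l k' l' where pq: "p = (k,l)" "q = (k',l')" "(k,l)\<in>T" "(k',l')\<in>T" by (cases p, cases q) auto
  have F1: "(odd k \<longleftrightarrow> (l \<le> 2*r \<longleftrightarrow> s)) \<and> (even l \<longleftrightarrow> (k \<le> 2*c \<longleftrightarrow> s))" using pq(3) T by blast
  have F2: "(odd k' \<longleftrightarrow> (l' \<le> 2*r \<longleftrightarrow> s)) \<and> (even l' \<longleftrightarrow> (k' \<le> 2*c \<longleftrightarrow> s))" using pq(4) T by blast
  have "k \<le> k'+1 \<Longrightarrow> k' \<le> k+1 \<Longrightarrow> l \<le> l'+1 \<Longrightarrow> l' \<le> l+1 \<Longrightarrow> k = k' \<and> l = l'"
    using G_nonadj[OF F1 F2] by blast
  thus "\<not> adjacent p q" unfolding pq(1,2) adjacent_def by auto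
qed



context
  fixes c r :: nat and S :: "(nat\<times>nat) set"
  assumes c: "0<c" and r: "0<r" and V: "valid_config (4*c) (4*r) c r S"
begin

lemma box_uniq:
  assumes "(k,l)\<in>S" "(k',l')\<in>S" "(k+1) div 2 = (k'+1) div 2" "(l+1) div 2 = (l'+1) div 2"
  shows "k = k' \<and> l = l'"
proof -
  have "k \<le> k'+1" "k' \<le> k+1" "l \<le> l'+1" "l' \<le> l+1" using assms(3,4) by presburger+
  thus ?thesis using vc_noadj[OF V assms(1,2)] by blast
qed

lemma box_ex:
  assumes "1 \<le> a" "a \<le> 2*c" "1 \<le> b" "b \<le> 2*r"
  shows "\<exists>k l. (k,l)\<in>S \<and> (k+1) div 2 = a \<and> (l+1) div 2 = b"
proof -
  define A where "A = {l. (2*a-1,l)\<in>S \<or> (2*a-1+1,l)\<in>S}"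
  have cA: "card A = 2*r" and sA: "A \<subseteq> {1..4*r}" and nA: "\<And>l. l\<in>A \<Longrightarrow> l+1 \<notin> A"
    using rowpair[OF V, of "2*a-1"] assms unfolding A_def by auto
  have inj: "inj_on (\<lambda>l. (l+1) div 2) A"
  proof (rule inj_onI)
    fix x y assume xy: "x\<in>A" "y\<in>A" "(x+1) div 2 = (y+1) div 2"
    have "x = y \<or> y = x+1 \<or> x = y+1" using xy(3) by presburger
    thus "x = y" using nA xy(1,2) by auto
  qed
  have img: "(\<lambda>l. (l+1) div 2) ` A \<subseteq> {1..2*r}"
  proof
    fix y assume "y \<in> (\<lambda>l. (l+1) div 2) ` A"
    then obtain x where x: "x\<in>A" "y = (x+1) div 2" by auto
    have "1 \<le> x" "x \<le> 4*r" using sA x(1) by auto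
    hence "1 \<le> (x+1) div 2" "(x+1) div 2 \<le> 2*r" by presburger+
    thus "y \<in> {1..2*r}" using x by simp
  qed
  have eq: "(\<lambda>l. (l+1) div 2) ` A = {1..2*r}"
    using card_subset_eq[OF finite_atLeastAtMost img] card_image[OF inj] cA by simp
  have "b \<in> {1..2*r}" using assms by simp
  hence "b \<in> (\<lambda>l. (l+1) div 2) ` A" unfolding eq .
  then obtain l where l: "l\<in>A" "(l+1) div 2 = b" by (auto elim!: imageE)
  have d1: "(2*a-1+1) div 2 = a" and d2: "(2*a-1+1+1) div 2 = a" using assms by presburger+
  have "(2*a-1,l)\<in>S \<or> (2*a-1+1,l)\<in>S" using l(1) unfolding A_def by simp
  then show ?thesis
  proof
    assume h: "(2*a-1,l)\<in>S"
    show ?thesis apply (rule exI[of _ "2*a-1"], rule exI[of _ l]) using h d1 l(2) by simp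
  next
    assume h: "(2*a-1+1,l)\<in>S"
    show ?thesis apply (rule exI[of _ "2*a-1+1"], rule exI[of _ l]) using h d2 l(2) by simp
  qed
qed

definition R where "R a b \<longleftrightarrow> (\<exists>k. (k, 2*b) \<in> S \<and> (k+1) div 2 = a)"
definition D where "D a b \<longleftrightarrow> (\<exists>l. (2*a, l) \<in> S \<and> (l+1) div 2 = b)"

lemma charS1:
  assumes kl: "(k,l) \<in> S"
  shows "(even k \<longleftrightarrow> D ((k+1) div 2) ((l+1) div 2)) \<and> (even l \<longleftrightarrow> R ((k+1) div 2) ((l+1) div 2))"
proof (intro conjI iffI)
  assume "even k" then obtain a where a: "k = 2*a" by blast
  hence e: "(k+1) div 2 = a" by simp
  show "D ((k+1) div 2) ((l+1) div 2)" unfolding D_def e apply (rule exI[of _ l]) using kl a by simp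
next
  assume "D ((k+1) div 2) ((l+1) div 2)"
  then obtain l' where l': "(2*((k+1) div 2), l') \<in> S" "(l'+1) div 2 = (l+1) div 2" unfolding D_def by auto
  have "k = 2*((k+1) div 2) \<and> l = l'" by (rule box_uniq[OF kl l'(1)]) (simp, metis l'(2) Suc_eq_plus1)
  thus "even k" by (metis dvd_triv_left)
next
  assume "even l" then obtain b where b: "l = 2*b" by blast
  hence e: "(l+1) div 2 = b" by simp
  show "R ((k+1) div 2) ((l+1) div 2)" unfolding R_def e apply (rule exI[of _ k]) using kl b by simp
next
  assume "R ((k+1) div 2) ((l+1) div 2)"
  then obtain k' where k': "(k', 2*((l+1) div 2)) \<in> S" "(k'+1) div 2 = (k+1) div 2" unfolding R_def by auto
  have "k = k' \<and> l = 2*((l+1) div 2)" by (rule box_uniq[OF kl k'(1)]) (metis k'(2) Suc_eq_plus1, simp)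
  thus "even l" by (metis dvd_triv_left)
qed

lemma charS:
  "(k,l) \<in> S \<longleftrightarrow> (1 \<le> k \<and> k \<le> 4*c \<and> 1 \<le> l \<and> l \<le> 4*r \<and>
     (even k \<longleftrightarrow> D ((k+1) div 2) ((l+1) div 2)) \<and> (even l \<longleftrightarrow> R ((k+1) div 2) ((l+1) div 2)))"
proof
  assume "(k,l) \<in> S" thus "(1 \<le> k \<and> k \<le> 4*c \<and> 1 \<le> l \<and> l \<le> 4*r \<and>
     (even k \<longleftrightarrow> D ((k+1) div 2) ((l+1) div 2)) \<and> (even l \<longleftrightarrow> R ((k+1) div 2) ((l+1) div 2)))"
    using charS1[of k l] vc_sub[OF V, of k l] by blast
next
  assume H: "(1 \<le> k \<and> k \<le> 4*c \<and> 1 \<le> l \<and> l \<le> 4*r \<and>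
     (even k \<longleftrightarrow> D ((k+1) div 2) ((l+1) div 2)) \<and> (even l \<longleftrightarrow> R ((k+1) div 2) ((l+1) div 2)))"
  have H1: "1 \<le> k" "k \<le> 4*c" "1 \<le> l" "l \<le> 4*r" using H by auto
  have "1 \<le> (k+1) div 2" "(k+1) div 2 \<le> 2*c" "1 \<le> (l+1) div 2" "(l+1) div 2 \<le> 2*r"
    using half_range[OF H1(1,2)] half_range[OF H1(3,4)] by auto
  from box_ex[OF this] obtain k' l' where kl': "(k',l')\<in>S" "(k'+1) div 2 = (k+1) div 2" "(l'+1) div 2 = (l+1) div 2"
    by blast
  have c1: "(even k' \<longleftrightarrow> D ((k+1) div 2) ((l+1) div 2)) \<and> (even l' \<longleftrightarrow> R ((k+1) div 2) ((l+1) div 2))"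
    using charS1[OF kl'(1)] unfolding kl'(2,3) .
  have e1: "even k' \<longleftrightarrow> even k" using c1 H by blast
  have e2: "even l' \<longleftrightarrow> even l" using c1 H by blast
  have "k' = k" using same_box[OF kl'(2) e1] .
  moreover have "l' = l" using same_box[OF kl'(3) e2] .
  ultimately show "(k,l) \<in> S" using kl'(1) by simp
qed


lemma R_mono:
  assumes "1 \<le> a" "a \<le> 2*c" "1 \<le> b" "b < 2*r" "R a b"
  shows "R a (b+1)"
proof -
  obtain k where k: "(k,2*b)\<in>S" "(k+1) div 2 = a" using assms(5) unfolding R_def by blast
  have "1 \<le> b+1" "b+1 \<le> 2*r" using assms by simp_all
  from box_ex[OF assms(1,2) this] obtain k' l' where kl: "(k',l')\<in>S" "(k'+1) div 2 = a" "(l'+1) div 2 = b+1"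
    by blast
  have "l' = 2*b+1 \<or> l' = 2*(b+1)" using kl(3) by presburger
  thus ?thesis
  proof
    assume "l' = 2*b+1"
    moreover have "k \<le> k'+1" "k' \<le> k+1" using k(2) kl(2) by presburger+
    ultimately have "2*b = l'" using vc_noadj[OF V k(1) kl(1)] by linarith
    hence False using \<open>l' = 2*b+1\<close> by simp
    thus ?thesis ..
  next
    assume e: "l' = 2*(b+1)"
    show ?thesis unfolding R_def apply (rule exI[of _ k']) using kl e by simp
  qed
qed

lemma D_mono:
  assumes "1 \<le> a" "a < 2*c" "1 \<le> b" "b \<le> 2*r" "D a b"
  shows "D (a+1) b"
proof -
  obtain l where l: "(2*a,l)\<in>S" "(l+1) div 2 = b" using assms(5) unfolding D_def by blast
  have "1 \<le> a+1" "a+1 \<le> 2*c" using assms by simp_all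
  from box_ex[OF this assms(3,4)] obtain k' l' where kl: "(k',l')\<in>S" "(k'+1) div 2 = a+1" "(l'+1) div 2 = b"
    by blast
  have "k' = 2*a+1 \<or> k' = 2*(a+1)" using kl(2) by presburger
  thus ?thesis
  proof
    assume "k' = 2*a+1"
    moreover have "l \<le> l'+1" "l' \<le> l+1" using l(2) kl(3) by presburger+
    ultimately have "2*a = k'" using vc_noadj[OF V l(1) kl(1)] by linarith
    hence False using \<open>k' = 2*a+1\<close> by simp
    thus ?thesis ..
  next
    assume e: "k' = 2*(a+1)"
    show ?thesis unfolding D_def apply (rule exI[of _ l']) using kl e by simp
  qed
qed

lemma R_card:
  assumes "1 \<le> b" "b \<le> 2*r"
  shows "card {a\<in>{1..2*c}. R a b} = c"
proof -
  let ?K = "{k. (k,2*b)\<in>S}"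
  have cK: "card ?K = c" using vc_col[OF V, of "2*b"] assms by simp
  have inj: "inj_on (\<lambda>k. (k+1) div 2) ?K"
  proof (rule inj_onI)
    fix x y assume "x \<in> ?K" "y \<in> ?K" "(x+1) div 2 = (y+1) div 2"
    thus "x = y" using box_uniq[of x "2*b" y "2*b"] by simp
  qed
  have "(\<lambda>k. (k+1) div 2) ` ?K = {a\<in>{1..2*c}. R a b}"
  proof (rule set_eqI iffI)+
    fix a assume "a \<in> (\<lambda>k. (k+1) div 2) ` ?K"
    then obtain k where k: "(k,2*b)\<in>S" "a = (k+1) div 2" by blast
    have "1 \<le> k" "k \<le> 4*c" using vc_sub[OF V k(1)] by auto
    hence "1 \<le> a" "a \<le> 2*c" using k(2) by presburger+
    moreover have "R a b" unfolding R_def using k by blast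
    ultimately show "a \<in> {a\<in>{1..2*c}. R a b}" by simp
  next
    fix a assume "a \<in> {a\<in>{1..2*c}. R a b}"
    then obtain k where k: "(k,2*b)\<in>S" "(k+1) div 2 = a" unfolding R_def by blast
    thus "a \<in> (\<lambda>k. (k+1) div 2) ` ?K" by force
  qed
  thus ?thesis using card_image[OF inj] cK by simp
qed

lemma D_card:
  assumes "1 \<le> a" "a \<le> 2*c"
  shows "card {b\<in>{1..2*r}. D a b} = r"
proof -
  let ?K = "{l. (2*a,l)\<in>S}"
  have cK: "card ?K = r" using vc_row[OF V, of "2*a"] assms by simp
  have inj: "inj_on (\<lambda>l. (l+1) div 2) ?K"
  proof (rule inj_onI)
    fix x y assume "x \<in> ?K" "y \<in> ?K" "(x+1) div 2 = (y+1) div 2"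
    thus "x = y" using box_uniq[of "2*a" x "2*a" y] by simp
  qed
  have "(\<lambda>l. (l+1) div 2) ` ?K = {b\<in>{1..2*r}. D a b}"
  proof (rule set_eqI iffI)+
    fix b assume "b \<in> (\<lambda>l. (l+1) div 2) ` ?K"
    then obtain l where l: "(2*a,l)\<in>S" "b = (l+1) div 2" by blast
    have "1 \<le> l" "l \<le> 4*r" using vc_sub[OF V l(1)] by auto
    hence "1 \<le> b" "b \<le> 2*r" using l(2) by presburger+
    moreover have "D a b" unfolding D_def using l by blast
    ultimately show "b \<in> {b\<in>{1..2*r}. D a b}" by simp
  next
    fix b assume "b \<in> {b\<in>{1..2*r}. D a b}"
    then obtain l where l: "(2*a,l)\<in>S" "(l+1) div 2 = b" unfolding D_def by blast
    thus "b \<in> (\<lambda>l. (l+1) div 2) ` ?K" by force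
  qed
  thus ?thesis using card_image[OF inj] cK by simp
qed

lemma R_step:
  assumes "1 \<le> b" "b < 2*r" "1 \<le> a" "a \<le> 2*c"
  shows "R a (b+1) = R a b"
proof -
  have sub: "{a\<in>{1..2*c}. R a b} \<subseteq> {a\<in>{1..2*c}. R a (b+1)}"
  proof (rule subsetI)
    fix x assume "x \<in> {a\<in>{1..2*c}. R a b}"
    hence x: "1 \<le> x" "x \<le> 2*c" "R x b" by auto
    have "R x (b+1)" by (rule R_mono[OF x(1,2) assms(1,2) x(3)])
    thus "x \<in> {a\<in>{1..2*c}. R a (b+1)}" using x by simp
  qed
  have c1: "card {a\<in>{1..2*c}. R a b} = c" by (rule R_card) (use assms in simp_all)
  have c2: "card {a\<in>{1..2*c}. R a (b+1)} = c" by (rule R_card) (use assms in simp_all)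
  have ceq: "card {a\<in>{1..2*c}. R a b} = card {a\<in>{1..2*c}. R a (b+1)}" by (simp only: c1 c2)
  have eq: "{a\<in>{1..2*c}. R a b} = {a\<in>{1..2*c}. R a (b+1)}"
    by (rule card_subset_eq[OF _ sub ceq]) simp
  have "a \<in> {a\<in>{1..2*c}. R a b} \<longleftrightarrow> a \<in> {a\<in>{1..2*c}. R a (b+1)}" by (simp only: eq)
  thus ?thesis using assms(3,4) by simp
qed

lemma D_step:
  assumes "1 \<le> a" "a < 2*c" "1 \<le> b" "b \<le> 2*r"
  shows "D (a+1) b = D a b"
proof -
  have sub: "{b\<in>{1..2*r}. D a b} \<subseteq> {b\<in>{1..2*r}. D (a+1) b}"
  proof (rule subsetI)
    fix x assume "x \<in> {b\<in>{1..2*r}. D a b}"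
    hence x: "1 \<le> x" "x \<le> 2*r" "D a x" by auto
    have "D (a+1) x" by (rule D_mono[OF assms(1,2) x(1,2) x(3)])
    thus "x \<in> {b\<in>{1..2*r}. D (a+1) b}" using x by simp
  qed
  have c1: "card {b\<in>{1..2*r}. D a b} = r" by (rule D_card) (use assms in simp_all)
  have c2: "card {b\<in>{1..2*r}. D (a+1) b} = r" by (rule D_card) (use assms in simp_all)
  have ceq: "card {b\<in>{1..2*r}. D a b} = card {b\<in>{1..2*r}. D (a+1) b}" by (simp only: c1 c2)
  have eq: "{b\<in>{1..2*r}. D a b} = {b\<in>{1..2*r}. D (a+1) b}"
    by (rule card_subset_eq[OF _ sub ceq]) simp
  have "b \<in> {b\<in>{1..2*r}. D a b} \<longleftrightarrow> b \<in> {b\<in>{1..2*r}. D (a+1) b}" by (simp only: eq)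
  thus ?thesis using assms(3,4) by simp
qed

lemma R_const:
  assumes "1 \<le> a" "a \<le> 2*c"
  shows "1 \<le> b \<Longrightarrow> b \<le> 2*r \<Longrightarrow> R a b = R a 1"
proof (induction b)
  case 0 thus ?case by simp
next
  case (Suc b)
  show ?case
  proof (cases "b = 0")
    case True thus ?thesis by simp
  next
    case False
    hence "R a (b+1) = R a b" using R_step[of b a] Suc.prems assms by simp
    thus ?thesis using Suc False by simp
  qed
qed

lemma D_const:
  assumes "1 \<le> b" "b \<le> 2*r"
  shows "1 \<le> a \<Longrightarrow> a \<le> 2*c \<Longrightarrow> D a b = D 1 b"
proof (induction a)
  case 0 thus ?case by simp
next
  case (Suc a)
  show ?case
  proof (cases "a = 0")
    case True thus ?thesis by simp
  next
    case False
    hence "D (a+1) b = D a b" using D_step[of a b] Suc.prems assms by simp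
    thus ?thesis using Suc False by simp
  qed
qed

definition X where "X a \<longleftrightarrow> R a 1"
definition Y where "Y b \<longleftrightarrow> D 1 b"

lemma charXY:
  "(k,l) \<in> S \<longleftrightarrow> (1 \<le> k \<and> k \<le> 4*c \<and> 1 \<le> l \<and> l \<le> 4*r \<and>
     (even k \<longleftrightarrow> Y ((l+1) div 2)) \<and> (even l \<longleftrightarrow> X ((k+1) div 2)))"
proof -
  have eqs: "(D ((k+1) div 2) ((l+1) div 2) \<longleftrightarrow> Y ((l+1) div 2)) \<and> (R ((k+1) div 2) ((l+1) div 2) \<longleftrightarrow> X ((k+1) div 2))"
    if h: "1 \<le> k" "k \<le> 4*c" "1 \<le> l" "l \<le> 4*r"
  proof -
    have a: "1 \<le> (k+1) div 2" "(k+1) div 2 \<le> 2*c" using half_range[OF h(1,2)] by auto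
    have b: "1 \<le> (l+1) div 2" "(l+1) div 2 \<le> 2*r" using half_range[OF h(3,4)] by auto
    show ?thesis unfolding X_def Y_def using D_const[OF b a] R_const[OF a b] by blast
  qed
  show ?thesis
  proof
    assume h: "(k,l) \<in> S"
    from h[unfolded charS] eqs show "(1 \<le> k \<and> k \<le> 4*c \<and> 1 \<le> l \<and> l \<le> 4*r \<and>
     (even k \<longleftrightarrow> Y ((l+1) div 2)) \<and> (even l \<longleftrightarrow> X ((k+1) div 2)))" by blast
  next
    assume h: "(1 \<le> k \<and> k \<le> 4*c \<and> 1 \<le> l \<and> l \<le> 4*r \<and>
     (even k \<longleftrightarrow> Y ((l+1) div 2)) \<and> (even l \<longleftrightarrow> X ((k+1) div 2)))"
    have "(1 \<le> k \<and> k \<le> 4*c \<and> 1 \<le> l \<and> l \<le> 4*r \<and>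
     (even k \<longleftrightarrow> D ((k+1) div 2) ((l+1) div 2)) \<and> (even l \<longleftrightarrow> R ((k+1) div 2) ((l+1) div 2)))"
      using h eqs by blast
    thus "(k,l) \<in> S" unfolding charS .
  qed
qed

lemma X_card: "card {a\<in>{1..2*c}. X a} = c"
  unfolding X_def using R_card[of 1] r by simp

lemma Y_card: "card {b\<in>{1..2*r}. Y b} = r"
  unfolding Y_def using D_card[of 1] c by simp

lemma cons1:
  assumes "1 \<le> a" "a < 2*c" "1 \<le> b" "b < 2*r" "Y b" "\<not> Y (b+1)" "X a" "\<not> X (a+1)"
  shows False
proof -
  have e1: "(2*b+1) div 2 = b" "(2*a+1) div 2 = a" "(2*b+1+1) div 2 = b+1" "(2*a+1+1) div 2 = a+1" by simp_all
  have p1: "(2*a, 2*b) \<in> S" unfolding charXY e1 using assms by simp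
  have p2: "(2*a+1, 2*b+1) \<in> S" unfolding charXY e1 using assms by simp
  from vc_noadj[OF V p1 p2] show False by simp
qed

lemma cons2:
  assumes "1 \<le> a" "a < 2*c" "1 \<le> b" "b < 2*r" "\<not> Y b" "Y (b+1)" "\<not> X a" "X (a+1)"
  shows False
proof -
  have e1: "(2*b+1) div 2 = b" "(2*a+1) div 2 = a" "(2*b+1+1) div 2 = b+1" "(2*a+1+1) div 2 = a+1" by simp_all
  have p1: "(2*a, 2*b+1) \<in> S" unfolding charXY e1 using assms by simp
  have p2: "(2*a+1, 2*b) \<in> S" unfolding charXY e1 using assms by simp
  from vc_noadj[OF V p1 p2] show False by simp
qed

lemma classify: "S = shuriken1 c r \<or> S = shuriken2 c r"
proof (cases "\<exists>a. 1 \<le> a \<and> a < 2*c \<and> X a \<and> \<not> X (a+1)")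
  case True
  then obtain a0 where a0: "1 \<le> a0" "a0 < 2*c" "X a0" "\<not> X (a0+1)" by blast
  have Yup: "Y (b+1)" if "1 \<le> b" "b < 2*r" "Y b" for b
    using cons1[OF a0(1,2) that(1,2) that(3) _ a0(3,4)] by blast
  have Yc: "Y b \<longleftrightarrow> 2*r - r < b" if "1 \<le> b" "b \<le> 2*r" for b
    by (rule upclosed[of "2*r" Y, OF Yup Y_card that]) 
  have Yr: "\<not> Y r" "Y (r+1)" using Yc[of r] Yc[of "r+1"] r by simp_all
  have Xdn: "X a" if "1 \<le> a" "a < 2*c" "X (a+1)" for a
    using cons2[OF that(1,2) _ _ Yr, of] r that(3) by fastforce
  have Xc: "X a \<longleftrightarrow> a \<le> c" if "1 \<le> a" "a \<le> 2*c" for a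
    by (rule downclosed[of "2*c" X, OF Xdn X_card that])
  have "(k,l) \<in> S \<longleftrightarrow> (k,l) \<in> shuriken1 c r" for k l
  proof -
    have "(k,l) \<in> S \<longleftrightarrow> (1 \<le> k \<and> k \<le> 4*c \<and> 1 \<le> l \<and> l \<le> 4*r \<and>
       (even k \<longleftrightarrow> r < (l+1) div 2) \<and> (even l \<longleftrightarrow> (k+1) div 2 \<le> c))"
    proof -
      have "1 \<le> k \<Longrightarrow> k \<le> 4*c \<Longrightarrow> 1 \<le> l \<Longrightarrow> l \<le> 4*r \<Longrightarrow> (Y ((l+1) div 2) \<longleftrightarrow> r < (l+1) div 2) \<and> (X ((k+1) div 2) \<longleftrightarrow> (k+1) div 2 \<le> c)"
        using Yc Xc half_range[of k c] half_range[of l r] by auto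
      thus ?thesis unfolding charXY by blast
    qed
    also have "\<dots> \<longleftrightarrow> (k,l) \<in> shuriken1 c r" unfolding mem_S1 by presburger
    finally show ?thesis .
  qed
  thus ?thesis by auto
next
  case False
  have Xup: "X (a+1)" if "1 \<le> a" "a < 2*c" "X a" for a
    using False that by blast
  have Xc: "X a \<longleftrightarrow> 2*c - c < a" if "1 \<le> a" "a \<le> 2*c" for a
    by (rule upclosed[of "2*c" X, OF Xup X_card that])
  have Xr: "\<not> X c" "X (c+1)" using Xc[of c] Xc[of "c+1"] c by simp_all
  have Ydn: "Y b" if "1 \<le> b" "b < 2*r" "Y (b+1)" for b
    using cons2[OF _ _ that(1,2) _ that(3) Xr, of] c by fastforce
  have Yc: "Y b \<longleftrightarrow> b \<le> r" if "1 \<le> b" "b \<le> 2*r" for b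
    by (rule downclosed[of "2*r" Y, OF Ydn Y_card that])
  have "(k,l) \<in> S \<longleftrightarrow> (k,l) \<in> shuriken2 c r" for k l
  proof -
    have "(k,l) \<in> S \<longleftrightarrow> (1 \<le> k \<and> k \<le> 4*c \<and> 1 \<le> l \<and> l \<le> 4*r \<and>
       (even k \<longleftrightarrow> (l+1) div 2 \<le> r) \<and> (even l \<longleftrightarrow> c < (k+1) div 2))"
    proof -
      have "1 \<le> k \<Longrightarrow> k \<le> 4*c \<Longrightarrow> 1 \<le> l \<Longrightarrow> l \<le> 4*r \<Longrightarrow> (Y ((l+1) div 2) \<longleftrightarrow> (l+1) div 2 \<le> r) \<and> (X ((k+1) div 2) \<longleftrightarrow> c < (k+1) div 2)"
        using Yc Xc half_range[of k c] half_range[of l r] by auto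
      thus ?thesis unfolding charXY by blast
    qed
    also have "\<dots> \<longleftrightarrow> (k,l) \<in> shuriken2 c r" unfolding mem_S2 by presburger
    finally show ?thesis .
  qed
  thus ?thesis by auto
qed
end

theorem theorem2:
  fixes c r :: nat
  assumes "0 < c" and "0 < r"
  shows "(\<forall>m n S. 1 \<le> m \<and> 1 \<le> n \<and> (m, n) \<noteq> (1, 1) \<and> valid_config m n c r S
            \<longrightarrow> 4*c \<le> m \<and> 4*r \<le> n)
       \<and> ((\<exists>S. valid_config 1 1 c r S) \<longleftrightarrow> c = 1 \<and> r = 1)
       \<and> {S. valid_config (4*c) (4*r) c r S} = {shuriken1 c r, shuriken2 c r}
       \<and> shuriken1 c r \<noteq> shuriken2 c r"
proof (intro conjI)
  show "\<forall>m n S. 1 \<le> m \<and> 1 \<le> n \<and> (m, n) \<noteq> (1, 1) \<and> valid_config m n c r S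
            \<longrightarrow> 4*c \<le> m \<and> 4*r \<le> n"
    using part1[OF assms] by blast
  show "(\<exists>S. valid_config 1 1 c r S) \<longleftrightarrow> c = 1 \<and> r = 1" by (rule part11[OF assms])
  have v1: "valid_config (4*c) (4*r) c r (shuriken1 c r)"
    by (rule valid_gen[where s=True]) (simp add: mem_S1)
  have v2: "valid_config (4*c) (4*r) c r (shuriken2 c r)"
    by (rule valid_gen[where s=False]) (unfold mem_S2 not_le[symmetric], argo)
  show "{S. valid_config (4*c) (4*r) c r S} = {shuriken1 c r, shuriken2 c r}"
    using classify[OF assms] v1 v2 by blast
  have "(1,2) \<in> shuriken1 c r" unfolding mem_S1 using assms by simp
  moreover have "(1,2) \<notin> shuriken2 c r" unfolding mem_S2 using assms by simp
  ultimately show "shuriken1 c r \<noteq> shuriken2 c r" by blast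
qed

end
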